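(* Let $k\geq 2$, let $G$ be a graph with $G\in\mathcal{R}_k$, and let $x\in V(G)$. Let $G'$ be the graph obtained from $G$ by adding a new vertex $y\notin V(G)$ and the edge $(x,y)$. Then $G'\in\mathcal{R}_k$.
   Context: All graphs are finite and simple. For a word $w$ and distinct letters $x,y$ occurring in $w$, $x$ and $y$ alternate in $w$ if deleting all letters other than copies of $x$ and $y$ yields a word of the form $xyxy\cdots$ or $yxyx\cdots$ (of even or odd length). A graph $G=(V,E)$ is word-representable if there is a word $w$ over $V$ (each vertex occurring in $w$) such that for all distinct $x,y\in V$, $x$ and $y$ alternate in $w$ iff $(x,y)\in E$. A word is $k$-uniform if each letter occurs exactly $k$ times; $G$ is $k$-word-representable if some $k$-uniform word represents it. The representation number $\mathcal{R}(G)$ is the least such $k$, and $\mathcal{R}_k$ is the class of word-representable graphs with representation number exactly $k$. *)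

theory Defs
  imports Main
begin

definition simple_graph :: "'a set \<Rightarrow> ('a \<Rightarrow> 'a \<Rightarrow> bool) \<Rightarrow> bool" where
  "simple_graph V E \<longleftrightarrow> finite V \<and> (\<forall>a b. E a b \<longrightarrow> a \<in> V \<and> b \<in> V)
     \<and> (\<forall>a b. E a b \<longrightarrow> E b a) \<and> (\<forall>a. \<not> E a a)"

definition alternates :: "'a list \<Rightarrow> 'a \<Rightarrow> 'a \<Rightarrow> bool" where
  "alternates w x y \<longleftrightarrow>
     (let u = filter (\<lambda>z. z = x \<or> z = y) w in \<forall>i. Suc i < length u \<longrightarrow> u ! i \<noteq> u ! Suc i)"

definition represents :: "'a set \<Rightarrow> ('a \<Rightarrow> 'a \<Rightarrow> bool) \<Rightarrow> 'a list \<Rightarrow> bool" where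
  "represents V E w \<longleftrightarrow> set w = V \<and>
     (\<forall>x\<in>V. \<forall>y\<in>V. x \<noteq> y \<longrightarrow> (alternates w x y \<longleftrightarrow> E x y))"

definition word_representable :: "'a set \<Rightarrow> ('a \<Rightarrow> 'a \<Rightarrow> bool) \<Rightarrow> bool" where
  "word_representable V E \<longleftrightarrow> (\<exists>w. represents V E w)"

definition uniform :: "nat \<Rightarrow> 'a list \<Rightarrow> bool" where
  "uniform k w \<longleftrightarrow> (\<forall>v\<in>set w. count_list w v = k)"

definition k_word_representable :: "nat \<Rightarrow> 'a set \<Rightarrow> ('a \<Rightarrow> 'a \<Rightarrow> bool) \<Rightarrow> bool" where
  "k_word_representable k V E \<longleftrightarrow> (\<exists>w. uniform k w \<and> represents V E w)"

definition rep_number :: "'a set \<Rightarrow> ('a \<Rightarrow> 'a \<Rightarrow> bool) \<Rightarrow> nat" where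
  "rep_number V E = (LEAST k. k_word_representable k V E)"

definition in_R :: "nat \<Rightarrow> 'a set \<Rightarrow> ('a \<Rightarrow> 'a \<Rightarrow> bool) \<Rightarrow> bool" where
  "in_R k V E \<longleftrightarrow> word_representable V E \<and> rep_number V E = k"

end

theory Submission
  imports Defs
begin

fun ins :: "'a \<Rightarrow> 'a \<Rightarrow> 'a list \<Rightarrow> 'a list" where
  "ins x y [] = []"
| "ins x y (c # cs) = (if c = x then x # y # ins x y cs else c # ins x y cs)"

definition noadj :: "'a list \<Rightarrow> bool" where
  "noadj u \<longleftrightarrow> (\<forall>i. Suc i < length u \<longrightarrow> u ! i \<noteq> u ! Suc i)"

lemma noadj_Nil[simp]: "noadj []" and noadj_single[simp]: "noadj [a]"
  by (auto simp: noadj_def)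

lemma noadj_Cons2[simp]: "noadj (a # b # t) \<longleftrightarrow> a \<noteq> b \<and> noadj (b # t)"
proof
  assume h: "noadj (a # b # t)"
  have "a \<noteq> b" using h[unfolded noadj_def, rule_format, of 0] by simp
  moreover have "noadj (b # t)" unfolding noadj_def
  proof (intro allI impI)
    fix i assume "Suc i < length (b # t)"
    then show "(b # t) ! i \<noteq> (b # t) ! Suc i"
      using h[unfolded noadj_def, rule_format, of "Suc i"] by simp
  qed
  ultimately show "a \<noteq> b \<and> noadj (b # t)" by simp
next
  assume h: "a \<noteq> b \<and> noadj (b # t)"
  show "noadj (a # b # t)" unfolding noadj_def
  proof (intro allI impI)
    fix i assume i: "Suc i < length (a # b # t)"
    show "(a # b # t) ! i \<noteq> (a # b # t) ! Suc i"
    proof (cases i)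
      case 0 then show ?thesis using h by simp
    next
      case (Suc j) then show ?thesis using h i unfolding noadj_def by auto
    qed
  qed
qed

lemma not_noadj_yy: "\<not> noadj (u @ y # y # v)"
  unfolding noadj_def
  by (auto intro!: exI[of _ "length u"] simp: nth_append)

lemma alternates_noadj: "alternates w a b \<longleftrightarrow> noadj (filter (\<lambda>z. z = a \<or> z = b) w)"
  by (simp add: alternates_def noadj_def Let_def)

lemma alternates_sym: "alternates w a b \<longleftrightarrow> alternates w b a"
proof -
  have "(\<lambda>z. z = a \<or> z = b) = (\<lambda>z. z = b \<or> z = a)" by auto
  then show ?thesis by (simp add: alternates_noadj)
qed

lemma filter_ins: "\<not> P y \<Longrightarrow> filter P (ins x y t) = filter P t"
  by (induction t) auto

lemma filter_ins_xy: "y \<notin> set t \<Longrightarrow> x \<noteq> y \<Longrightarrow>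
  filter (\<lambda>z. z = x \<or> z = y) (ins x y t) = concat (replicate (count_list t x) [x, y])"
  by (induction t) auto

lemma set_ins: "set (ins x y t) = set t \<union> (if x \<in> set t then {y} else {})"
  by (induction t) auto

lemma count_ins_y: "y \<notin> set t \<Longrightarrow> x \<noteq> y \<Longrightarrow> count_list (ins x y t) y = count_list t x"
  by (induction t) auto

lemma noadj_rep1: "x \<noteq> y \<Longrightarrow> noadj (y # concat (replicate n [x, y]))"
  by (induction n) auto

lemma noadj_rep2: "x \<noteq> y \<Longrightarrow> noadj (y # concat (replicate n [x, y]) @ [x])"
  by (induction n) auto

lemma count_filter: "P v \<Longrightarrow> count_list (filter P w) v = count_list w v"
  by (induction w) auto

lemma deletion:
  assumes "represents (insert y V) (\<lambda>a b. E a b \<or> (a = x \<and> b = y) \<or> (a = y \<and> b = x)) w"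
    and "y \<notin> V"
  shows "represents V E (filter (\<lambda>c. c \<noteq> y) w)"
  unfolding represents_def
proof (intro conjI ballI impI)
  show "set (filter (\<lambda>c. c \<noteq> y) w) = V" using assms unfolding represents_def by auto
next
  fix a b assume ab: "a \<in> V" "b \<in> V" "a \<noteq> b"
  then have ny: "a \<noteq> y" "b \<noteq> y" using assms(2) by auto
  have "(\<lambda>c. c \<noteq> y \<and> (c = a \<or> c = b)) = (\<lambda>c. c = a \<or> c = b)" using ny by auto
  then have "alternates (filter (\<lambda>c. c \<noteq> y) w) a b = alternates w a b"
    by (simp add: alternates_noadj)
  also have "\<dots> = E a b" using assms(1) ab ny unfolding represents_def by auto
  finally show "alternates (filter (\<lambda>c. c \<noteq> y) w) a b = E a b" .
qed

lemma deletion_k: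
  assumes "k_word_representable j (insert y V) (\<lambda>a b. E a b \<or> (a = x \<and> b = y) \<or> (a = y \<and> b = x))"
    and "y \<notin> V"
  shows "k_word_representable j V E"
proof -
  obtain w where w: "uniform j w" "represents (insert y V) (\<lambda>a b. E a b \<or> (a = x \<and> b = y) \<or> (a = y \<and> b = x)) w"
    using assms unfolding k_word_representable_def by blast
  have "uniform j (filter (\<lambda>c. c \<noteq> y) w)"
    using w(1) unfolding uniform_def by (auto simp: count_filter)
  then show ?thesis using deletion[OF w(2) assms(2)] unfolding k_word_representable_def by blast
qed

lemma generic:
  assumes sg: "simple_graph V E" and rep: "represents V E w" and "x \<in> V" "y \<notin> V"
    and set': "set w' = insert y V"
    and fil: "filter (\<lambda>c. c \<noteq> y) w' = w"
    and xy: "noadj (filter (\<lambda>z. z = x \<or> z = y) w')"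
    and yz: "\<forall>z\<in>V. z \<noteq> x \<longrightarrow> \<not> noadj (filter (\<lambda>c. c = y \<or> c = z) w')"
  shows "represents (insert y V) (\<lambda>a b. E a b \<or> (a = x \<and> b = y) \<or> (a = y \<and> b = x)) w'"
  unfolding represents_def
proof (intro conjI ballI impI)
  show "set w' = insert y V" by fact
next
  fix a b assume a: "a \<in> insert y V" and b: "b \<in> insert y V" and ab: "a \<noteq> b"
  have Ey: "\<And>z. \<not> E y z \<and> \<not> E z y" using sg \<open>y \<notin> V\<close> unfolding simple_graph_def by blast
  show "alternates w' a b = (E a b \<or> a = x \<and> b = y \<or> a = y \<and> b = x)"
  proof (cases "a = y")
    case True
    then have bV: "b \<in> V" using b ab by auto
    show ?thesis
    proof (cases "b = x")
      case True
      then show ?thesis using xy \<open>a = y\<close> alternates_sym[of w' y x] by (simp add: alternates_noadj)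
    next
      case False
      then show ?thesis using yz bV \<open>a = y\<close> Ey by (simp add: alternates_noadj)
    qed
  next
    case False
    then have aV: "a \<in> V" using a by auto
    show ?thesis
    proof (cases "b = y")
      case True
      show ?thesis
      proof (cases "a = x")
        case True
        then show ?thesis using xy \<open>b = y\<close> by (simp add: alternates_noadj)
      next
        case False
        then show ?thesis using yz aV ab \<open>b = y\<close> Ey alternates_sym[of w' a y]
          by (simp add: alternates_noadj)
      qed
    next
      case False
      then have bV: "b \<in> V" using b by auto
      have ny: "a \<noteq> y" "b \<noteq> y" using \<open>a \<noteq> y\<close> False by auto
      have "(\<lambda>c. c \<noteq> y \<and> (c = a \<or> c = b)) = (\<lambda>c. c = a \<or> c = b)" using ny by auto
      then have "alternates w a b = alternates w' a b"
        using fil[symmetric] by (simp add: alternates_noadj)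
      moreover have "alternates w a b = E a b" using rep aV bV ab unfolding represents_def by auto
      ultimately show ?thesis using ny by auto
    qed
  qed
qed

lemma add_general:
  assumes sg: "simple_graph V E" and rep: "represents V E w" and x: "x \<in> V" and y: "y \<notin> V"
  shows "word_representable (insert y V) (\<lambda>a b. E a b \<or> (a = x \<and> b = y) \<or> (a = y \<and> b = x))"
proof -
  have sw: "set w = V" using rep unfolding represents_def by auto
  obtain a r where ar: "w = a @ x # r" "x \<notin> set a" using split_list_first[of x w] x sw by auto
  have xy: "x \<noteq> y" using x y by auto
  have ya: "y \<notin> set a" "y \<notin> set r" using ar sw y by auto
  have fa: "filter (\<lambda>c. c \<noteq> y) a = a" "filter (\<lambda>c. c \<noteq> y) r = r"
    using ya by (auto simp: filter_id_conv)
  have fxa: "filter (\<lambda>z. z = x \<or> z = y) a = []"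
    using ya ar by (auto simp: filter_empty_conv)
  define w' where "w' = a @ y # x # y # ins x y r"
  have "represents (insert y V) (\<lambda>a b. E a b \<or> (a = x \<and> b = y) \<or> (a = y \<and> b = x)) w'"
  proof (rule generic[OF sg rep x y])
    show "set w' = insert y V" using sw ar unfolding w'_def by (auto simp: set_ins)
    show "filter (\<lambda>c. c \<noteq> y) w' = w" using ar fa xy unfolding w'_def by (simp add: filter_ins)
    show "noadj (filter (\<lambda>z. z = x \<or> z = y) w')"
      using ar ya xy noadj_rep1[OF xy, of "count_list r x"] fxa
      unfolding w'_def by (simp add: filter_ins_xy)
    show "\<forall>z\<in>V. z \<noteq> x \<longrightarrow> \<not> noadj (filter (\<lambda>c. c = y \<or> c = z) w')"
      using xy unfolding w'_def by (auto simp: not_noadj_yy)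
  qed
  then show ?thesis unfolding word_representable_def by blast
qed

lemma add_uniform:
  assumes sg: "simple_graph V E" and x: "x \<in> V" and y: "y \<notin> V" and j: "j \<ge> 2"
    and kw: "k_word_representable j V E"
  shows "k_word_representable j (insert y V) (\<lambda>a b. E a b \<or> (a = x \<and> b = y) \<or> (a = y \<and> b = x))"
proof -
  obtain w where u: "uniform j w" and rep: "represents V E w"
    using kw unfolding k_word_representable_def by blast
  have sw: "set w = V" using rep unfolding represents_def by auto
  have cx: "count_list w x = j" using u x sw unfolding uniform_def by auto
  obtain a r where ar: "w = a @ x # r" "x \<notin> set a" using split_list_first[of x w] x sw by auto
  have "count_list r x = j - 1" using cx ar by simp
  then have "x \<in> set r" using j count_list_0_iff[of r x] by auto
  then obtain m c where mc: "r = m @ x # c" "x \<notin> set c" using split_list_last[of x r] by auto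
  have xy: "x \<noteq> y" using x y by auto
  have ya: "y \<notin> set a" "y \<notin> set m" "y \<notin> set c" using ar mc sw y by auto
  have fa: "filter (\<lambda>c. c \<noteq> y) a = a" "filter (\<lambda>c. c \<noteq> y) m = m"
     "filter (\<lambda>c. c \<noteq> y) c = c"
    using ya by (auto simp: filter_id_conv)
  have fxa: "filter (\<lambda>z. z = x \<or> z = y) a = []" "filter (\<lambda>z. z = x \<or> z = y) c = []"
    using ya ar mc by (auto simp: filter_empty_conv)
  define w' where "w' = a @ y # x # y # ins x y m @ x # c"
  have rep': "represents (insert y V) (\<lambda>a b. E a b \<or> (a = x \<and> b = y) \<or> (a = y \<and> b = x)) w'"
  proof (rule generic[OF sg rep x y])
    show "set w' = insert y V" using sw ar mc unfolding w'_def by (auto simp: set_ins)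
    show "filter (\<lambda>c. c \<noteq> y) w' = w" using ar mc fa xy unfolding w'_def by (simp add: filter_ins)
    show "noadj (filter (\<lambda>z. z = x \<or> z = y) w')"
      using ar mc ya xy noadj_rep2[OF xy, of "count_list m x"] fxa
      unfolding w'_def by (simp add: filter_ins_xy)
    show "\<forall>z\<in>V. z \<noteq> x \<longrightarrow> \<not> noadj (filter (\<lambda>c. c = y \<or> c = z) w')"
      using xy unfolding w'_def by (auto simp: not_noadj_yy)
  qed
  have fil: "filter (\<lambda>c. c \<noteq> y) w' = w" using ar mc fa xy unfolding w'_def by (simp add: filter_ins)
  have "uniform j w'" unfolding uniform_def
  proof
    fix v assume v: "v \<in> set w'"
    show "count_list w' v = j"
    proof (cases "v = y")
      case True
      have "count_list w' y = 2 + count_list m x"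
        using ya xy unfolding w'_def by (simp add: count_ins_y)
      moreover have "count_list w x = 2 + count_list m x" using ar mc by simp
      ultimately show ?thesis using True cx by simp
    next
      case False
      have "count_list w' v = count_list (filter (\<lambda>c. c \<noteq> y) w') v"
        using False by (simp add: count_filter)
      also have "\<dots> = count_list w v" using fil by simp
      also have "\<dots> = j"
      proof -
        have "v \<in> set w" using v False fil[symmetric] by auto
        then show ?thesis using u unfolding uniform_def by blast
      qed
      finally show ?thesis .
    qed
  qed
  then show ?thesis using rep' unfolding k_word_representable_def by blast
qed

theorem proposition6:
  fixes V :: "'a set" and E :: "'a \<Rightarrow> 'a \<Rightarrow> bool" and k :: nat and x y :: 'a
  assumes "k \<ge> 2"
    and "simple_graph V E"
    and "in_R k V E"
    and "x \<in> V"
    and "y \<notin> V"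
  shows "in_R k (insert y V)
           (\<lambda>a b. E a b \<or> (a = x \<and> b = y) \<or> (a = y \<and> b = x))"
proof -
  let ?E' = "\<lambda>a b. E a b \<or> (a = x \<and> b = y) \<or> (a = y \<and> b = x)"
  have rn: "rep_number V E = k" and wr: "word_representable V E"
    using assms(3) unfolding in_R_def by auto
  have eq: "(\<lambda>j. k_word_representable j (insert y V) ?E') = (\<lambda>j. k_word_representable j V E)"
  proof
    fix j
    show "k_word_representable j (insert y V) ?E' = k_word_representable j V E"
    proof
      assume "k_word_representable j (insert y V) ?E'"
      then show "k_word_representable j V E" by (rule deletion_k[OF _ assms(5)])
    next
      assume h: "k_word_representable j V E"
      then have "rep_number V E \<le> j" unfolding rep_number_def by (rule Least_le)
      then have "j \<ge> 2" using rn assms(1) by simp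
      then show "k_word_representable j (insert y V) ?E'"
        by (rule add_uniform[OF assms(2) assms(4) assms(5) _ h])
    qed
  qed
  have "rep_number (insert y V) ?E' = k" using rn unfolding rep_number_def eq .
  moreover have "word_representable (insert y V) ?E'"
  proof -
    obtain w where "represents V E w" using wr unfolding word_representable_def by blast
    then show ?thesis by (rule add_general[OF assms(2) _ assms(4) assms(5)])
  qed
  ultimately show ?thesis unfolding in_R_def by simp
qed

end
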